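(* For all integers $d\ge 0$ and $t>0$, the unary words $a^d$ and $a^{d+t}$ can be separated exactly by a 2-state AfA over $\{a\}$ whose end-marker operator $A_\$$ is the identity.
   Context: An $n$-state affine finite automaton (AfA) over a finite alphabet $\Sigma$ consists of real $n\times n$ matrices $A_\sigma$ for $\sigma\in\Sigma\cup\{\$\}$ ($\$$ a right end-marker not in $\Sigma$), each of whose columns sums to $1$; an initial vector $v_0\in\mathbb{R}^n$ whose entries sum to $1$; and a set $E_a\subseteq\{1,\dots,n\}$ of accepting states. On input $w=w_1\cdots w_k$ the final vector is $v_f=A_\$A_{w_k}\cdots A_{w_1}v_0$, and $w$ is accepted with probability $\sum_{j\in E_a}|v_f[j]|\big/\sum_{j=1}^n|v_f[j]|$. A pair of words is separated exactly if one is accepted with probability $1$ and the other with probability $0$. *)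

theory Defs
  imports "HOL-Analysis.Analysis" "HOL-Library.Numeral_Type"
begin

text \<open>An affine matrix: every column sums to 1.\<close>
definition affine_matrix :: "real^'n^'n \<Rightarrow> bool" where
  "affine_matrix A \<longleftrightarrow> (\<forall>j. (\<Sum>i\<in>UNIV. A $ i $ j) = 1)"

text \<open>An affine finite automaton over alphabet type 's with state set 'n:
  letter matrices Aw, end-marker matrix Aend, initial vector v0, accepting set E.\<close>
definition is_afa :: "('s \<Rightarrow> real^'n^'n) \<Rightarrow> real^'n^'n \<Rightarrow> real^'n \<Rightarrow> 'n set \<Rightarrow> bool" where
  "is_afa Aw Aend v0 E \<longleftrightarrow>
     (\<forall>s. affine_matrix (Aw s)) \<and> affine_matrix Aend \<and> (\<Sum>i\<in>UNIV. v0 $ i) = 1"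

text \<open>Final vector: A_end A_{w_k} ... A_{w_1} v0 (first letter applied first).\<close>
definition afa_final :: "('s \<Rightarrow> real^'n^'n) \<Rightarrow> real^'n^'n \<Rightarrow> real^'n \<Rightarrow> 's list \<Rightarrow> real^'n" where
  "afa_final Aw Aend v0 w = Aend *v fold (\<lambda>s v. Aw s *v v) w v0"

definition afa_accept_prob :: "('s \<Rightarrow> real^'n^'n) \<Rightarrow> real^'n^'n \<Rightarrow> real^'n \<Rightarrow> 'n set \<Rightarrow> 's list \<Rightarrow> real" where
  "afa_accept_prob Aw Aend v0 E w =
     (let vf = afa_final Aw Aend v0 w in
       (\<Sum>j\<in>E. \<bar>vf $ j\<bar>) / (\<Sum>j\<in>UNIV. \<bar>vf $ j\<bar>))"

text \<open>Exact separation of two words.\<close>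
definition afa_separates_exactly :: "('s \<Rightarrow> real^'n^'n) \<Rightarrow> real^'n^'n \<Rightarrow> real^'n \<Rightarrow> 'n set \<Rightarrow> 's list \<Rightarrow> 's list \<Rightarrow> bool" where
  "afa_separates_exactly Aw Aend v0 E u w \<longleftrightarrow>
     (afa_accept_prob Aw Aend v0 E u = 1 \<and> afa_accept_prob Aw Aend v0 E w = 0) \<or>
     (afa_accept_prob Aw Aend v0 E u = 0 \<and> afa_accept_prob Aw Aend v0 E w = 1)"

end

theory Submission
  imports Defs
begin

theorem mainTheorem7:
  fixes d t :: nat
  assumes "t > 0"
  shows "\<exists>(Aw :: unit \<Rightarrow> real^2^2) (v0 :: real^2) (E :: 2 set).
           is_afa Aw (mat 1) v0 E \<and>
           afa_separates_exactly Aw (mat 1) v0 E (replicate d ()) (replicate (d + t) ())"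
proof -
  define c :: real where "c = 1 / real t"
  have ct: "c * real t = 1" using assms by (simp add: c_def)
  define A :: "real^2^2" where
    "A = (\<chi> i j. if i = 1 then (if j = 1 then 1 + c else c) else (if j = 1 then - c else 1 - c))"
  define V :: "nat \<Rightarrow> real^2" where
    "V k = (\<chi> i. if i = 1 then c * (real k - real d) else 1 - c * (real k - real d))" for k
  have step: "A *v V k = V (Suc k)" for k
    unfolding A_def V_def matrix_vector_mult_def
    by (simp add: vec_eq_iff forall_2 sum_2 algebra_simps)
  have fold: "fold (\<lambda>s v. A *v v) (replicate k ()) (V 0) = V k" for k
  proof (induction k)
    case 0 then show ?case by simp
  next
    case (Suc k)
    have "fold (\<lambda>s v. A *v v) (replicate (Suc k) ()) (V 0)
          = fold (\<lambda>s v. A *v v) (replicate k () @ [()]) (V 0)"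
      by (simp add: replicate_append_same)
    also have "\<dots> = A *v V k" using Suc by simp
    finally show ?case using step by simp
  qed
  have afa: "is_afa (\<lambda>_. A) (mat 1) (V 0) {1}"
    unfolding is_afa_def affine_matrix_def A_def V_def
    by (simp add: sum_2 forall_2 mat_def)
  have p1: "afa_accept_prob (\<lambda>_. A) (mat 1) (V 0) {1} (replicate d ()) = 0"
    unfolding afa_accept_prob_def afa_final_def Let_def fold
    by (simp add: V_def)
  have p2: "afa_accept_prob (\<lambda>_. A) (mat 1) (V 0) {1} (replicate (d + t) ()) = 1"
    unfolding afa_accept_prob_def afa_final_def Let_def fold
    by (simp add: V_def sum_2 ct)
  show ?thesis
    using afa p1 p2 unfolding afa_separates_exactly_def by blast
qed

end
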